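(* Let $0\le\lambda<\gamma\le\delta$ and let $\mathfrak{f}=\mathfrak{s}+\overline{\mathfrak{t}}\in\mathcal{R}_H^0(\gamma,\delta,\lambda)$. Let $$pc(r)=(-\delta-2\gamma+\lambda)r^3+(3\delta+6\gamma-3\lambda)r^2+(-3\delta-7\gamma+4\lambda)r+\delta+\gamma.$$ Then $pc(r)=0$ has a unique real root $r_c$ in $(0,1)$, and $\mathfrak{f}$ is fully convex in $|z|<r_c$.
   Context: Let $\mathcal{U}=\{z\in\mathbb{C}:|z|<1\}$. $\mathcal{H}^0$ denotes the class of complex-valued harmonic functions $\mathfrak{f}=\mathfrak{s}+\overline{\mathfrak{t}}$ on $\mathcal{U}$, where $\mathfrak{s}(z)=z+\sum_{m\ge2}a_mz^m$ and $\mathfrak{t}(z)=\sum_{m\ge2}b_mz^m$ are analytic in $\mathcal{U}$. For real $0\le\lambda<\gamma\le\delta$, $\mathcal{R}_H^0(\gamma,\delta,\lambda)$ is the class of $\mathfrak{f}=\mathfrak{s}+\overline{\mathfrak{t}}\in\mathcal{H}^0$ such that for all $z\in\mathcal{U}$, $\mathrm{Re}\left[\gamma\mathfrak{s}'(z)+\delta z\mathfrak{s}''(z)+\frac{\delta-\gamma}{2}z^2\mathfrak{s}'''(z)-\lambda\right]>\left|\gamma\mathfrak{t}'(z)+\delta z\mathfrak{t}''(z)+\frac{\delta-\gamma}{2}z^2\mathfrak{t}'''(z)\right|$. A harmonic function $\mathfrak{f}$ is fully convex in the disk $|z|<R$ if it maps every circle $|z|=\rho$, $0<\rho<R$, in a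 one-to-one manner onto a convex curve (equivalently, for each $0<r<R$ the function $\mathfrak{f}(rz)/r$ maps every circle $|z|=\rho<1$ one-to-one onto a convex curve). *)

theory Defs
  imports "HOL-Complex_Analysis.Complex_Analysis"
begin

definition H0 :: "(complex \<Rightarrow> complex) \<Rightarrow> (complex \<Rightarrow> complex) \<Rightarrow> bool" where
  "H0 s t \<longleftrightarrow> s holomorphic_on ball 0 1 \<and> t holomorphic_on ball 0 1 \<and>
     s 0 = 0 \<and> deriv s 0 = 1 \<and> t 0 = 0 \<and> deriv t 0 = 0"

definition harm :: "(complex \<Rightarrow> complex) \<Rightarrow> (complex \<Rightarrow> complex) \<Rightarrow> complex \<Rightarrow> complex" where
  "harm s t z = s z + cnj (t z)"

definition Lop :: "real \<Rightarrow> real \<Rightarrow> (complex \<Rightarrow> complex) \<Rightarrow> complex \<Rightarrow> complex" where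
  "Lop \<gamma> \<delta> g z = of_real \<gamma> * deriv g z + of_real \<delta> * z * (deriv ^^ 2) g z
      + of_real ((\<delta> - \<gamma>) / 2) * z\<^sup>2 * (deriv ^^ 3) g z"

definition RH0 :: "real \<Rightarrow> real \<Rightarrow> real \<Rightarrow> (complex \<Rightarrow> complex) \<Rightarrow> (complex \<Rightarrow> complex) \<Rightarrow> bool" where
  "RH0 \<gamma> \<delta> lam s t \<longleftrightarrow> H0 s t \<and>
     (\<forall>z\<in>ball 0 1. Re (Lop \<gamma> \<delta> s z - of_real lam) > cmod (Lop \<gamma> \<delta> t z))"

definition convex_curve :: "complex set \<Rightarrow> bool" where
  "convex_curve C \<longleftrightarrow> (\<exists>K. convex K \<and> bounded K \<and> interior K \<noteq> {} \<and> C = frontier K)"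

definition fully_convex_in :: "(complex \<Rightarrow> complex) \<Rightarrow> real \<Rightarrow> bool" where
  "fully_convex_in f R \<longleftrightarrow> (\<forall>\<rho>. 0 < \<rho> \<and> \<rho> < R \<longrightarrow>
      inj_on f (sphere 0 \<rho>) \<and> convex_curve (f ` sphere 0 \<rho>))"

definition pc :: "real \<Rightarrow> real \<Rightarrow> real \<Rightarrow> real \<Rightarrow> real" where
  "pc \<gamma> \<delta> lam r = (- \<delta> - 2*\<gamma> + lam) * r^3 + (3*\<delta> + 6*\<gamma> - 3*lam) * r^2
      + (- 3*\<delta> - 7*\<gamma> + 4*lam) * r + \<delta> + \<gamma>"

end

theory Submission
  imports Defs
begin


lemma pc_alt: "pc g d l r = (d+g)*(1-r)^3 - (g-l)*(r*(r^2-3*r+4))"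
  unfolding pc_def by (simp add: power2_eq_square power3_eq_cube algebra_simps)

lemma cub_mono:
  fixes x y :: real assumes "x < y"
  shows "x*(x^2-3*x+4) < y*(y^2-3*y+4)"
proof -
  have "2*(y*(y^2-3*y+4) - x*(x^2-3*x+4)) = (y-x)*(((x-1)^2+(y-1)^2+(x+y-2)^2) + 2)"
    by (simp add: power2_eq_square algebra_simps)
  moreover have "(y-x)*(((x-1)^2+(y-1)^2+(x+y-2)^2) + 2) > 0"
    using assms by (intro mult_pos_pos) (auto intro: add_nonneg_pos)
  ultimately show ?thesis by (smt (verit))
qed

lemma pc_strict_decr:
  fixes g d l x y :: real
  assumes "l < g" "g \<le> d" "0 \<le> l" "x < y" "y \<le> 1"
  shows "pc g d l y < pc g d l x"
proof -
  have "(1-y)^3 \<le> (1-x)^3" using assms by (intro power_mono) auto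
  hence a: "(d+g)*(1-y)^3 \<le> (d+g)*(1-x)^3" using assms by (intro mult_left_mono) auto
  have "(g-l)*(x*(x^2-3*x+4)) < (g-l)*(y*(y^2-3*y+4))"
    using assms cub_mono[of x y] by (intro mult_strict_left_mono) auto
  with a show ?thesis unfolding pc_alt by linarith
qed

lemma pc_root:
  fixes g d l :: real
  assumes "l < g" "g \<le> d" "0 \<le> l"
  shows "\<exists>!r. 0 < r \<and> r < 1 \<and> pc g d l r = 0"
proof -
  have c: "\<forall>x. 0 \<le> x \<and> x \<le> 1 \<longrightarrow> isCont (pc g d l) x"
    unfolding pc_def by (intro allI impI continuous_intros)
  have "pc g d l 1 \<le> 0" "0 \<le> pc g d l 0" using assms by (simp_all add: pc_def)
  from IVT2[OF this _ c] obtain r where r: "0 \<le> r" "r \<le> 1" "pc g d l r = 0" by auto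
  have "r \<noteq> 0" using r assms by (auto simp: pc_def)
  moreover have "r \<noteq> 1" using r assms by (auto simp: pc_def)
  ultimately have ex: "0 < r \<and> r < 1 \<and> pc g d l r = 0" using r by auto
  show ?thesis
  proof (rule ex1I[of _ r])
    fix y assume y: "0 < y \<and> y < 1 \<and> pc g d l y = 0"
    show "y = r"
    proof (rule ccontr)
      assume "y \<noteq> r"
      hence "y < r \<or> r < y" by auto
      thus False using pc_strict_decr[OF assms(1-3), of y r] pc_strict_decr[OF assms(1-3), of r y] y ex
        by auto
    qed
  qed (use ex in auto)
qed



lemma higher_deriv_sum_fin:
  fixes f :: "'i \<Rightarrow> complex \<Rightarrow> complex"
  assumes "finite I" "\<And>i. i \<in> I \<Longrightarrow> f i holomorphic_on S" "open S" "z \<in> S"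
  shows "(deriv ^^ n) (\<lambda>w. \<Sum>i\<in>I. f i w) z = (\<Sum>i\<in>I. (deriv ^^ n) (f i) z)"
  using assms(1,2)
proof (induction I rule: finite_induct)
  case empty
  then show ?case by simp
next
  case (insert x F)
  have "(deriv ^^ n) (\<lambda>w. \<Sum>i\<in>insert x F. f i w) z = (deriv ^^ n) (\<lambda>w. f x w + (\<Sum>i\<in>F. f i w)) z"
    using insert by simp
  also have "\<dots> = (deriv ^^ n) (f x) z + (deriv ^^ n) (\<lambda>w. \<Sum>i\<in>F. f i w) z"
    by (rule higher_deriv_add[OF _ _ assms(3,4)]) (use insert in \<open>auto intro!: holomorphic_intros\<close>)
  finally show ?case using insert by simp
qed

lemma norm_diff_lt_add:
  fixes a :: complex and c :: real
  assumes "Re a > 0" "c > 0"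
  shows "cmod (a - of_real c) < cmod (a + of_real c)"
proof -
  have "cmod (a - of_real c)^2 = (Re a - c)^2 + (Im a)^2" by (simp add: cmod_power2)
  also have "\<dots> < (Re a + c)^2 + (Im a)^2" using assms by (simp add: power2_eq_square algebra_simps)
  also have "\<dots> = cmod (a + of_real c)^2" by (simp add: cmod_power2)
  finally show ?thesis by (rule power_less_imp_less_base) simp
qed

lemma rou_pow:
  fixes n j :: nat
  assumes "0 < n"
  defines "\<zeta> \<equiv> exp (2 * of_real pi * \<i> / of_nat n)"
  shows "\<zeta> ^ j = exp (2 * of_real pi * \<i> * of_nat j / of_nat n)" "cmod \<zeta> = 1"
proof -
  show "\<zeta> ^ j = exp (2 * of_real pi * \<i> * of_nat j / of_nat n)"
    unfolding \<zeta>_def exp_of_nat_mult[symmetric] by (simp add: field_simps)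
  show "cmod \<zeta> = 1" unfolding \<zeta>_def by (simp add: norm_exp_eq_Re)
qed

lemma rou_sum:
  fixes n j :: nat
  assumes "0 < n" "0 < j" "j < n"
  defines "\<zeta> \<equiv> exp (2 * of_real pi * \<i> / of_nat n)"
  shows "(\<Sum>k<n. (\<zeta> ^ k) ^ j) = 0"
proof -
  have e: "\<zeta> ^ j = exp (2 * of_real pi * \<i> * of_nat j / of_nat n)"
    using rou_pow(1)[OF assms(1)] unfolding \<zeta>_def by blast
  have "(\<zeta> ^ j) ^ n = exp (of_nat n * (2 * of_real pi * \<i> * of_nat j / of_nat n))"
    unfolding e exp_of_nat_mult by simp
  also have "\<dots> = exp (of_nat j * (2 * of_real pi * \<i>))" using assms by (simp add: field_simps)
  also have "\<dots> = 1" unfolding exp_of_nat_mult by simp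
  finally have p1: "(\<zeta> ^ j) ^ n = 1" .
  have ne: "\<zeta> ^ j \<noteq> 1"
  proof
    assume "\<zeta> ^ j = 1"
    then obtain m :: int where m: "2 * pi * real j / real n = of_int (2 * m) * pi"
      unfolding e exp_eq_1 by (auto simp: field_simps)
    hence "real j = real n * of_int m" using assms by (simp add: field_simps)
    hence "int j = int n * m" by (metis of_int_eq_iff of_int_mult of_int_of_nat_eq)
    moreover have "m \<le> 0 \<or> m \<ge> 1" by auto
    ultimately show False using assms
      by (metis int_ops(1) less_le_not_le mult_le_0_iff mult_le_cancel_left1 of_nat_0_le_iff of_nat_0_less_iff of_nat_less_iff)
  qed
  have "(\<Sum>k<n. (\<zeta> ^ k) ^ j) = (\<Sum>k<n. (\<zeta> ^ j) ^ k)" by (simp add: power_mult[symmetric] mult.commute)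
  also have "\<dots> = 0" unfolding sum_gp_strict using ne p1 by simp
  finally show ?thesis .
qed

lemma carath:
  fixes F :: "complex \<Rightarrow> complex" and c :: real and n :: nat
  assumes hol: "F holomorphic_on ball 0 1" and pos: "\<And>z. z \<in> ball 0 1 \<Longrightarrow> Re (F z) > 0"
    and F0: "F 0 = of_real c" and n: "0 < n"
  shows "cmod ((deriv ^^ n) F 0) \<le> 2 * c * fact n"
proof -
  define \<zeta> where "\<zeta> = exp (2 * of_real pi * \<i> / of_nat n)"
  have nz: "cmod (\<zeta> ^ k) = 1" for k using rou_pow(2)[OF n] unfolding \<zeta>_def by (simp add: norm_power)
  have inb: "\<zeta> ^ k * z \<in> ball 0 1" if "z \<in> ball 0 1" for k z
    using that nz by (simp add: norm_mult)
  have c0: "c > 0" using pos[of 0] F0 by simp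
  define G where "G = (\<lambda>z. (\<Sum>k<n. F (\<zeta> ^ k * z)) / of_nat n)"
  have holk: "(\<lambda>z. F (\<zeta> ^ k * z)) holomorphic_on ball 0 1" for k
    by (rule holomorphic_on_compose_gen[OF _ hol, unfolded o_def]) (auto intro!: holomorphic_intros inb)
  have holG: "G holomorphic_on ball 0 1" unfolding G_def
    using holk n by (intro holomorphic_intros) auto
  have ReG: "Re (G z) > 0" if "z \<in> ball 0 1" for z
  proof -
    have "Re (G z) = (\<Sum>k<n. Re (F (\<zeta> ^ k * z))) / real n"
      unfolding G_def by (simp add: Re_divide_of_nat Re_sum)
    moreover have "(\<Sum>k<n. Re (F (\<zeta> ^ k * z))) > 0"
      using n pos inb[OF that] by (intro sum_pos) auto
    ultimately show ?thesis using n by simp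
  qed
  have G0: "G 0 = of_real c" unfolding G_def using n F0 by simp
  have DG: "(deriv ^^ j) G 0 = (\<Sum>k<n. (\<zeta> ^ k) ^ j * (deriv ^^ j) F 0) / of_nat n" for j
  proof -
    have "(deriv ^^ j) G 0 = (deriv ^^ j) (\<lambda>z. inverse (of_nat n) * (\<Sum>k<n. F (\<zeta> ^ k * z))) 0"
      unfolding G_def by (simp add: field_simps)
    also have "\<dots> = inverse (of_nat n) * (deriv ^^ j) (\<lambda>z. (\<Sum>k<n. F (\<zeta> ^ k * z))) 0"
      by (rule higher_deriv_cmult[of _ "ball 0 1"]) (use holk in \<open>auto intro!: holomorphic_intros\<close>)
    also have "(deriv ^^ j) (\<lambda>z. (\<Sum>k<n. F (\<zeta> ^ k * z))) 0 = (\<Sum>k<n. (deriv ^^ j) (\<lambda>z. F (\<zeta> ^ k * z)) 0)"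
      by (rule higher_deriv_sum_fin) (use holk in auto)
    also have "\<dots> = (\<Sum>k<n. (\<zeta> ^ k) ^ j * (deriv ^^ j) F 0)"
      by (intro sum.cong refl, subst higher_deriv_compose_linear[OF hol, of "ball 0 1"]) (auto simp: norm_mult nz)
    finally show ?thesis by (simp add: field_simps)
  qed
  have DG0: "(deriv ^^ j) G 0 = 0" if "0 < j" "j < n" for j
    unfolding DG by (simp add: sum_distrib_right[symmetric] rou_sum[OF n that, folded \<zeta>_def])
  have DGn: "(deriv ^^ n) G 0 = (deriv ^^ n) F 0"
  proof -
    have "(\<zeta> ^ k) ^ n = 1" for k
    proof -
      have "(\<zeta> ^ k) ^ n = (\<zeta> ^ n) ^ k" by (simp add: power_mult[symmetric] mult.commute)
      moreover have "\<zeta> ^ n = 1" unfolding rou_pow(1)[OF n, folded \<zeta>_def] using n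
        by (simp add: exp_eq_1)
      ultimately show ?thesis by simp
    qed
    then show ?thesis unfolding DG using n by simp
  qed
  define \<omega> where "\<omega> = (\<lambda>z. (G z - of_real c) / (G z + of_real c))"
  define E where "E = (\<lambda>z. G z - of_real c)"
  define P where "P = (\<lambda>z. G z + of_real c)"
  have Gc: "G z + of_real c \<noteq> 0" if "z \<in> ball 0 1" for z
  proof
    assume "G z + of_real c = 0"
    hence "Re (G z + of_real c) = 0" by simp
    hence "Re (G z) = - c" by simp
    with ReG[OF that] c0 show False by simp
  qed
  have hol\<omega>: "\<omega> holomorphic_on ball 0 1" unfolding \<omega>_def
    using holG Gc by (intro holomorphic_intros) auto
  have holE: "E holomorphic_on ball 0 1" unfolding E_def using holG by (intro holomorphic_intros)
  have holP: "P holomorphic_on ball 0 1" unfolding P_def using holG by (intro holomorphic_intros)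
  have \<omega>b: "cmod (\<omega> z) < 1" if "z \<in> ball 0 1" for z
  proof -
    have "cmod (G z + of_real c) > 0" using Gc[OF that] by simp
    then show ?thesis unfolding \<omega>_def norm_divide using norm_diff_lt_add[OF ReG[OF that] c0]
      by (simp add: divide_less_eq)
  qed
  have DE: "(deriv ^^ j) E 0 = (\<Sum>i=0..j. of_nat (j choose i) * (deriv ^^ i) \<omega> 0 * (deriv ^^ (j-i)) P 0)" for j
  proof -
    have "eventually (\<lambda>z. E z = \<omega> z * P z) (nhds 0)"
    proof (rule eventually_nhds_in_open[of "ball 0 1", THEN eventually_mono])
      fix z assume "z \<in> ball (0::complex) 1"
      then show "E z = \<omega> z * P z" unfolding E_def \<omega>_def P_def using Gc by simp
    qed auto
    hence "(deriv ^^ j) E 0 = (deriv ^^ j) (\<lambda>z. \<omega> z * P z) 0" by (rule higher_deriv_cong_ev) simp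
    also have "\<dots> = (\<Sum>i=0..j. of_nat (j choose i) * (deriv ^^ i) \<omega> 0 * (deriv ^^ (j-i)) P 0)"
      by (rule higher_deriv_mult[OF hol\<omega> holP]) auto
    finally show ?thesis .
  qed
  have DEj: "(deriv ^^ j) E 0 = (deriv ^^ j) G 0" if "0 < j" for j
    unfolding E_def using that by (subst higher_deriv_diff[OF holG _ _, of _ 0]) auto
  have DP: "(deriv ^^ j) P 0 = (if j = 0 then 2 * of_real c else (deriv ^^ j) G 0)" for j
    unfolding P_def using G0 by (subst higher_deriv_add[OF holG _ _, of _ 0]) auto
  have split: "(\<Sum>i=0..j. of_nat (j choose i) * (deriv ^^ i) \<omega> 0 * (deriv ^^ (j-i)) P 0)
      = (deriv ^^ j) \<omega> 0 * (2 * of_real c)" if "\<forall>i<j. (deriv ^^ i) \<omega> 0 = 0" for j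
  proof -
    have "{0..j} = insert j {0..<j}" by auto
    then have "(\<Sum>i=0..j. of_nat (j choose i) * (deriv ^^ i) \<omega> 0 * (deriv ^^ (j-i)) P 0)
       = (deriv ^^ j) \<omega> 0 * (deriv ^^ 0) P 0 + (\<Sum>i=0..<j. of_nat (j choose i) * (deriv ^^ i) \<omega> 0 * (deriv ^^ (j-i)) P 0)"
      by simp
    also have "(\<Sum>i=0..<j. of_nat (j choose i) * (deriv ^^ i) \<omega> 0 * (deriv ^^ (j-i)) P 0) = 0"
      using that by (intro sum.neutral) auto
    finally show ?thesis using DP[of 0] by simp
  qed
  have w0: "\<forall>i<j. (deriv ^^ i) \<omega> 0 = 0" if "j \<le> n" for j
    using that
  proof (induction j)
    case 0 then show ?case by simp
  next
    case (Suc j)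
    have IH: "\<forall>i<j. (deriv ^^ i) \<omega> 0 = 0" using Suc by simp
    have "(deriv ^^ j) E 0 = 0"
    proof (cases "j = 0")
      case True then show ?thesis unfolding E_def using G0 by simp
    next
      case False then show ?thesis using DEj DG0 Suc.prems by simp
    qed
    hence "(deriv ^^ j) \<omega> 0 * (2 * of_real c) = 0" using DE[of j] split[OF IH] by simp
    hence "(deriv ^^ j) \<omega> 0 = 0" using c0 by simp
    then show ?case using IH less_Suc_eq by auto
  qed
  have key: "(deriv ^^ n) F 0 = (deriv ^^ n) \<omega> 0 * (2 * of_real c)"
    using DE[of n] split[OF w0[of n]] DEj[OF n] DGn by simp
  have bnd: "cmod ((deriv ^^ n) F 0) \<le> 2 * c * fact n / r ^ n" if r: "0 < r" "r < 1" for r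
  proof -
    have "cmod ((deriv ^^ n) \<omega> 0) \<le> fact n * 1 / r ^ n"
    proof (rule Cauchy_higher_deriv_bound)
      show "\<omega> holomorphic_on ball 0 r" using hol\<omega> by (rule holomorphic_on_subset) (use r in auto)
      show "continuous_on (cball 0 r) \<omega>"
        using holomorphic_on_imp_continuous_on[OF hol\<omega>] by (rule continuous_on_subset) (use r in auto)
      show "\<omega> w \<in> ball 0 1" if "w \<in> ball 0 r" for w using \<omega>b[of w] that r by auto
    qed (use r n in auto)
    then have "cmod ((deriv ^^ n) \<omega> 0) * (2 * c) \<le> (fact n * 1 / r ^ n) * (2 * c)"
      using c0 by (intro mult_right_mono) auto
    moreover have "cmod (2 * complex_of_real c) = 2 * c" using c0 by (simp add: norm_mult)
    ultimately show ?thesis unfolding key norm_mult by (simp add: field_simps)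
  qed
  have lim: "((\<lambda>r. 2 * c * fact n / r ^ n) \<longlongrightarrow> 2 * c * fact n / 1 ^ n) (at_left (1::real))"
    by (intro tendsto_intros) auto
  show ?thesis
  proof (rule tendsto_lowerbound[OF lim[simplified]])
    show "\<forall>\<^sub>F r in at_left 1. cmod ((deriv ^^ n) F 0) \<le> 2 * c * fact n / r ^ n"
      unfolding eventually_at_left_field using bnd by (intro exI[of _ 0]) auto
  qed simp
qed


lemma dd_add: "(deriv ^^ m) ((deriv ^^ k) g) = (deriv ^^ (m + k)) g"
  by (simp add: funpow_add)

lemma hd_z:
  fixes h :: "complex \<Rightarrow> complex"
  assumes "h holomorphic_on ball 0 1" "0 < n"
  shows "(deriv ^^ n) (\<lambda>z. z * h z) 0 = of_nat n * (deriv ^^ (n-1)) h 0"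
proof -
  have "(deriv ^^ n) (\<lambda>z. z * h z) 0 = (\<Sum>i=0..n. of_nat (n choose i) * (deriv ^^ i) (\<lambda>z. z) 0 * (deriv ^^ (n-i)) h 0)"
    by (rule higher_deriv_mult[OF _ assms(1)]) (auto intro: holomorphic_intros)
  also have "\<dots> = (\<Sum>i\<in>{0..n}. if i = 1 then of_nat n * (deriv ^^ (n-1)) h 0 else 0)"
    by (intro sum.cong refl) auto
  also have "\<dots> = of_nat n * (deriv ^^ (n-1)) h 0" using assms by simp
  finally show ?thesis .
qed

lemma hd_sq: "(deriv ^^ i) (\<lambda>z::complex. z^2) 0 = (if i = 2 then 2 else 0)"
proof (cases i)
  case 0 then show ?thesis by simp
next
  case (Suc j)
  have d: "deriv (\<lambda>z::complex. z^2) = (\<lambda>z. 2 * z)"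
    by (rule ext, rule DERIV_imp_deriv) (auto intro!: derivative_eq_intros)
  have "(deriv ^^ i) (\<lambda>z::complex. z^2) = (deriv ^^ j) (\<lambda>z. 2 * z)"
    unfolding Suc funpow_Suc_right o_def d ..
  then show ?thesis using Suc by (auto simp: numeral_2_eq_2)
qed

lemma hd_z2:
  fixes h :: "complex \<Rightarrow> complex"
  assumes "h holomorphic_on ball 0 1"
  shows "(deriv ^^ n) (\<lambda>z. z^2 * h z) 0 = of_nat n * of_nat (n-1) * (deriv ^^ (n-2)) h 0"
proof -
  have "(deriv ^^ n) (\<lambda>z. z^2 * h z) 0 = (\<Sum>i=0..n. of_nat (n choose i) * (deriv ^^ i) (\<lambda>z. z^2) 0 * (deriv ^^ (n-i)) h 0)"
    by (rule higher_deriv_mult[OF _ assms(1)]) (auto intro: holomorphic_intros)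
  also have "\<dots> = (\<Sum>i\<in>{0..n}. if i = 2 then of_nat (n choose 2) * 2 * (deriv ^^ (n-2)) h 0 else 0)"
    unfolding hd_sq by (intro sum.cong refl) auto
  also have "\<dots> = of_nat n * of_nat (n-1) * (deriv ^^ (n-2)) h 0"
  proof (cases "n \<ge> 2")
    case True
    have "(n choose 2) * 2 = n * (n-1)" for n
      by (induction n) (auto simp: numeral_2_eq_2 algebra_simps)
    hence "of_nat (n choose 2) * (2::complex) = of_nat n * of_nat (n-1)"
      by (metis of_nat_mult of_nat_numeral True of_nat_diff)
    then show ?thesis using True by simp
  next
    case False
    hence "n = 0 \<or> n = 1" by auto
    then show ?thesis by auto
  qed
  finally show ?thesis .
qed

lemma Lop_higher:
  fixes g :: "complex \<Rightarrow> complex"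
  assumes hol: "g holomorphic_on ball 0 1" and n: "0 < n"
  shows "(deriv ^^ n) (Lop \<gamma> \<delta> g) 0 =
     of_real (\<gamma> + \<delta> * n + (\<delta> - \<gamma>) / 2 * n * (n - 1)) * (deriv ^^ (Suc n)) g 0"
proof -
  define c3 where "c3 = (\<delta> - \<gamma>) / 2"
  have hk: "(deriv ^^ k) g holomorphic_on ball 0 1" for k by (intro holomorphic_intros hol) auto
  have eq: "Lop \<gamma> \<delta> g = (\<lambda>z. of_real \<gamma> * (deriv ^^ 1) g z + (of_real \<delta> * (z * (deriv ^^ 2) g z)
       + of_real c3 * (z^2 * (deriv ^^ 3) g z)))"
    by (rule ext) (simp add: Lop_def c3_def mult.assoc)
  have h1: "(\<lambda>z. z * (deriv ^^ 2) g z) holomorphic_on ball 0 1" by (intro holomorphic_intros hk)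
  have h2: "(\<lambda>z. z^2 * (deriv ^^ 3) g z) holomorphic_on ball 0 1" by (intro holomorphic_intros hk)
  have "(deriv ^^ n) (Lop \<gamma> \<delta> g) 0 = of_real \<gamma> * (deriv ^^ n) ((deriv ^^ 1) g) 0 +
      (of_real \<delta> * (deriv ^^ n) (\<lambda>z. z * (deriv ^^ 2) g z) 0 +
       of_real c3 * (deriv ^^ n) (\<lambda>z. z^2 * (deriv ^^ 3) g z) 0)"
  proof -
    let ?A = "\<lambda>z. of_real \<gamma> * (deriv ^^ 1) g z"
    let ?B = "\<lambda>z. of_real \<delta> * (z * (deriv ^^ 2) g z)"
    let ?C = "\<lambda>z. of_real c3 * (z^2 * (deriv ^^ 3) g z)"
    have hA: "?A holomorphic_on ball 0 1" and hB: "?B holomorphic_on ball 0 1" and hC: "?C holomorphic_on ball 0 1"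
      by (intro holomorphic_intros hk h1 h2)+
    have "(deriv ^^ n) (\<lambda>z. ?A z + (?B z + ?C z)) 0 = (deriv ^^ n) ?A 0 + (deriv ^^ n) (\<lambda>z. ?B z + ?C z) 0"
      by (rule higher_deriv_add[of _ "ball 0 1"]) (use hA hB hC in \<open>auto intro!: holomorphic_intros\<close>)
    also have "(deriv ^^ n) (\<lambda>z. ?B z + ?C z) 0 = (deriv ^^ n) ?B 0 + (deriv ^^ n) ?C 0"
      by (rule higher_deriv_add[of _ "ball 0 1"]) (use hA hB hC in \<open>auto intro!: holomorphic_intros\<close>)
    also have "(deriv ^^ n) ?A 0 = of_real \<gamma> * (deriv ^^ n) ((deriv ^^ 1) g) 0"
      by (rule higher_deriv_cmult[of _ "ball 0 1"]) (use hk[of 1] in auto)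
    also have "(deriv ^^ n) ?B 0 = of_real \<delta> * (deriv ^^ n) (\<lambda>z. z * (deriv ^^ 2) g z) 0"
      by (rule higher_deriv_cmult[of _ "ball 0 1"]) (use h1 in auto)
    also have "(deriv ^^ n) ?C 0 = of_real c3 * (deriv ^^ n) (\<lambda>z. z^2 * (deriv ^^ 3) g z) 0"
      by (rule higher_deriv_cmult[of _ "ball 0 1"]) (use h2 in auto)
    finally show ?thesis unfolding eq .
  qed
  also have "\<dots> = of_real \<gamma> * (deriv ^^ (Suc n)) g 0 +
      (of_real \<delta> * (of_nat n * (deriv ^^ (Suc n)) g 0) +
       of_real c3 * (of_nat n * of_nat (n-1) * (deriv ^^ (Suc n)) g 0))"
  proof -
    have a: "(deriv ^^ n) ((deriv ^^ 1) g) = (deriv ^^ (Suc n)) g" unfolding funpow_Suc_right by simp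
    have b: "(deriv ^^ (n-1)) ((deriv ^^ 2) g) = (deriv ^^ (Suc n)) g"
      using n unfolding dd_add by simp
    have c: "of_nat n * of_nat (n-1) * (deriv ^^ (n-2)) ((deriv ^^ 3) g) 0 =
             of_nat n * of_nat (n-1) * (deriv ^^ (Suc n)) g (0::complex)"
    proof (cases "n \<ge> 2")
      case True
      then have "(deriv ^^ (n-2)) ((deriv ^^ 3) g) = (deriv ^^ (Suc n)) g"
        unfolding dd_add by simp
      then show ?thesis by simp
    next
      case False then have "n = 1" using n by auto
      then show ?thesis by simp
    qed
    show ?thesis unfolding a hd_z[OF hk n] b hd_z2[OF hk] c ..
  qed
  also have "\<dots> = of_real (\<gamma> + \<delta> * n + (\<delta> - \<gamma>) / 2 * n * (n - 1)) * (deriv ^^ (Suc n)) g 0"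
    using n by (simp add: c3_def of_nat_diff field_simps)
  finally show ?thesis .
qed



lemma Lop_hol: "g holomorphic_on ball 0 1 \<Longrightarrow> Lop \<gamma> \<delta> g holomorphic_on ball 0 1"
  unfolding Lop_def by (intro holomorphic_intros) auto

lemma Lop_0: "Lop \<gamma> \<delta> g 0 = of_real \<gamma> * deriv g 0"
  unfolding Lop_def by simp

lemma align:
  fixes A B :: complex
  defines "\<epsilon> \<equiv> (if A = 0 then 1 else A / of_real (cmod A)) * (if B = 0 then 1 else of_real (cmod B) / B)"
  shows "cmod \<epsilon> = 1" "cmod (A + \<epsilon> * B) = cmod A + cmod B"
proof -
  show "cmod \<epsilon> = 1" unfolding \<epsilon>_def by (auto simp: norm_mult norm_divide)
  show "cmod (A + \<epsilon> * B) = cmod A + cmod B"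
  proof (cases "A = 0")
    case True then show ?thesis unfolding \<epsilon>_def by auto
  next
    case A: False
    show ?thesis
    proof (cases "B = 0")
      case True then show ?thesis by (simp add: \<epsilon>_def)
    next
      case False
      have "A + \<epsilon> * B = A * of_real (1 + cmod B / cmod A)"
        using A False unfolding \<epsilon>_def by (simp add: field_simps)
      also have "cmod \<dots> = cmod A * (1 + cmod B / cmod A)"
        by (simp only: norm_mult norm_of_real) simp
      also have "\<dots> = cmod A + cmod B" using A by (simp add: field_simps)
      finally show ?thesis .
    qed
  qed
qed

lemma coeff_bound:
  fixes \<gamma> \<delta> lam :: real and s t :: "complex \<Rightarrow> complex"
  assumes "0 \<le> lam" "lam < \<gamma>" "\<gamma> \<le> \<delta>" and R: "RH0 \<gamma> \<delta> lam s t"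
  shows "cmod ((deriv ^^ (Suc (Suc n))) s 0) / fact (Suc (Suc n)) + cmod ((deriv ^^ (Suc (Suc n))) t 0) / fact (Suc (Suc n))
      \<le> (\<gamma> - lam) / (\<gamma> + \<delta>)"
proof -
  define m where "m = Suc n"
  have m: "0 < m" unfolding m_def by simp
  have hs: "s holomorphic_on ball 0 1" and ht: "t holomorphic_on ball 0 1" and s1: "deriv s 0 = 1" and t1: "deriv t 0 = 0"
    and pos: "\<And>z. z \<in> ball 0 1 \<Longrightarrow> Re (Lop \<gamma> \<delta> s z - of_real lam) > cmod (Lop \<gamma> \<delta> t z)"
    using R unfolding RH0_def H0_def by auto
  define A where "A = (deriv ^^ (Suc m)) s 0"
  define B where "B = (deriv ^^ (Suc m)) t 0"
  define \<epsilon> where "\<epsilon> = (if A = 0 then 1 else A / of_real (cmod A)) * (if B = 0 then 1 else of_real (cmod B) / B)"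
  have e1: "cmod \<epsilon> = 1" and e2: "cmod (A + \<epsilon> * B) = cmod A + cmod B" using align[of A B] unfolding \<epsilon>_def by auto
  define e where "e = \<gamma> + \<delta> * m + (\<delta> - \<gamma>) / 2 * m * (m - 1)"
  have "(\<delta> - \<gamma>) / 2 * m * (m - 1) \<ge> 0" using assms m by (intro mult_nonneg_nonneg) auto
  moreover have "\<delta> * m \<ge> \<delta>" using assms m by (simp add: mult_le_cancel_left1)
  ultimately have eg: "e \<ge> \<gamma> + \<delta>" unfolding e_def by linarith
  have gd: "\<gamma> + \<delta> > 0" using assms by linarith
  define F where "F = (\<lambda>z. (Lop \<gamma> \<delta> s z - of_real lam) + \<epsilon> * Lop \<gamma> \<delta> t z)"
  have hL: "Lop \<gamma> \<delta> s holomorphic_on ball 0 1" "Lop \<gamma> \<delta> t holomorphic_on ball 0 1"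
    using Lop_hol hs ht by auto
  have hF: "F holomorphic_on ball 0 1" unfolding F_def using hL by (intro holomorphic_intros) auto
  have pF: "Re (F z) > 0" if "z \<in> ball 0 1" for z
  proof -
    have "Re (\<epsilon> * Lop \<gamma> \<delta> t z) \<ge> - cmod (\<epsilon> * Lop \<gamma> \<delta> t z)"
      using abs_Re_le_cmod[of "\<epsilon> * Lop \<gamma> \<delta> t z"] by linarith
    also have "cmod (\<epsilon> * Lop \<gamma> \<delta> t z) = cmod (Lop \<gamma> \<delta> t z)" using e1 by (simp add: norm_mult)
    finally show ?thesis using pos[OF that] unfolding F_def by simp
  qed
  have F0: "F 0 = of_real (\<gamma> - lam)" unfolding F_def Lop_0 s1 t1 by simp
  have car: "cmod ((deriv ^^ m) F 0) \<le> 2 * (\<gamma> - lam) * fact m"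
    by (rule carath[OF hF pF F0 m])
  have "(deriv ^^ m) F 0 = (deriv ^^ m) (\<lambda>z. Lop \<gamma> \<delta> s z - of_real lam) 0 + (deriv ^^ m) (\<lambda>z. \<epsilon> * Lop \<gamma> \<delta> t z) 0"
    unfolding F_def by (rule higher_deriv_add[of _ "ball 0 1"]) (use hL in \<open>auto intro!: holomorphic_intros\<close>)
  also have "(deriv ^^ m) (\<lambda>z. Lop \<gamma> \<delta> s z - of_real lam) 0 = (deriv ^^ m) (Lop \<gamma> \<delta> s) 0"
    using m by (subst higher_deriv_diff[of _ "ball 0 1"]) (use hL in auto)
  also have "(deriv ^^ m) (\<lambda>z. \<epsilon> * Lop \<gamma> \<delta> t z) 0 = \<epsilon> * (deriv ^^ m) (Lop \<gamma> \<delta> t) 0"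
    by (rule higher_deriv_cmult[of _ "ball 0 1"]) (use hL in auto)
  also have "(deriv ^^ m) (Lop \<gamma> \<delta> s) 0 = of_real e * A"
    unfolding Lop_higher[OF hs m] A_def e_def ..
  also have "(deriv ^^ m) (Lop \<gamma> \<delta> t) 0 = of_real e * B"
    unfolding Lop_higher[OF ht m] B_def e_def ..
  finally have "(deriv ^^ m) F 0 = of_real e * (A + \<epsilon> * B)" by (simp add: algebra_simps)
  hence "cmod ((deriv ^^ m) F 0) = e * (cmod A + cmod B)" using e2 eg gd by (simp add: norm_mult)
  with car have ineq: "e * (cmod A + cmod B) \<le> 2 * (\<gamma> - lam) * fact m" by simp
  have fs: "fact (Suc m) = real (Suc m) * fact m" by simp
  have "e \<noteq> 0" using eg gd by linarith
  hence "(cmod A + cmod B) / fact (Suc m) = (e * (cmod A + cmod B)) / (e * (real (Suc m) * fact m))"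
    unfolding fs by (rule mult_divide_mult_cancel_left[symmetric])
  also have "\<dots> = (e * (cmod A + cmod B)) / (e * real (Suc m) * fact m)" by (simp add: mult.assoc)
  also have "\<dots> \<le> (2 * (\<gamma> - lam) * fact m) / (e * real (Suc m) * fact m)"
    using ineq eg gd by (intro divide_right_mono) auto
  also have "\<dots> = 2 * (\<gamma> - lam) / (e * real (Suc m))" by simp
  also have "\<dots> \<le> 2 * (\<gamma> - lam) / ((\<gamma> + \<delta>) * 2)"
    using assms eg gd m by (intro divide_left_mono mult_mono) auto
  also have "\<dots> = (\<gamma> - lam) / (\<gamma> + \<delta>)" using gd by (simp add: field_simps)
  finally show ?thesis unfolding A_def B_def m_def by (simp add: add_divide_distrib)
qed



definition qq :: "nat \<Rightarrow> real \<Rightarrow> real" where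
  "qq N x = (real N+2)^2 + ((real N+3)^2 - 3*(real N+2)^2) * x + ((real N+4)^2 - 3*(real N+3)^2 + 3*(real N+2)^2) * x^2"

lemma psum_id:
  fixes x :: real
  shows "(1-x)^3 * (\<Sum>n<N. (real n+2)^2 * x^(n+1)) = x*(x^2-3*x+4) - x^(N+1) * qq N x"
proof (induction N)
  case 0 then show ?case by (simp add: qq_def power2_eq_square algebra_simps)
next
  case (Suc N)
  have "(1-x)^3 * (\<Sum>n<Suc N. (real n+2)^2 * x^(n+1)) = (1-x)^3 * (\<Sum>n<N. (real n+2)^2 * x^(n+1)) + (1-x)^3 * ((real N+2)^2 * x^(N+1))"
    by (simp add: algebra_simps)
  also have "\<dots> = x*(x^2-3*x+4) - x^(N+1) * (qq N x - (1-x)^3 * (real N+2)^2)" unfolding Suc by (simp add: algebra_simps)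
  also have "qq N x - (1-x)^3 * (real N+2)^2 = x * qq (Suc N) x"
    by (simp add: qq_def power2_eq_square power3_eq_cube algebra_simps)
  finally show ?case by (simp add: algebra_simps)
qed

lemma qq_nonneg:
  fixes x :: real assumes "0 \<le> x" "x \<le> 1"
  shows "qq N x \<ge> 0"
proof -
  define M where "M = real N + 2"
  have "qq N x = M^2 * (1-x)^2 + x * ((2*M+1) - (2*M-1)*x)"
    unfolding qq_def M_def by (simp add: power2_eq_square algebra_simps)
  moreover have "(2*M-1)*x \<le> 2*M - 1" using assms unfolding M_def by (intro mult_left_le) auto
  ultimately show ?thesis using assms by (auto intro!: add_nonneg_nonneg mult_nonneg_nonneg)
qed

lemma psum_le:
  fixes x :: real assumes "0 \<le> x" "x < 1"
  shows "(\<Sum>n<N. (real n+2)^2 * x^(n+1)) \<le> x*(x^2-3*x+4) / (1-x)^3"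
proof -
  have p: "(1-x)^3 > 0" using assms by simp
  have "(1-x)^3 * (\<Sum>n<N. (real n+2)^2 * x^(n+1)) \<le> x*(x^2-3*x+4)"
    unfolding psum_id using qq_nonneg[of x N] assms by (simp add: mult_nonneg_nonneg)
  then show ?thesis using p by (simp add: field_simps)
qed

lemma four_sums_bound:
  fixes g1 g2 g3 g4 :: "nat \<Rightarrow> complex"
  assumes "g1 sums S1" "g2 sums S2" "g3 sums S3" "g4 sums S4"
    and "\<And>N. (\<Sum>n<N. cmod (g1 n) + cmod (g2 n) + cmod (g3 n) + cmod (g4 n)) \<le> M"
  shows "cmod S1 + cmod S2 + cmod S3 + cmod S4 \<le> M"
proof -
  have l: "(\<lambda>N. cmod (\<Sum>n<N. g1 n) + cmod (\<Sum>n<N. g2 n) + cmod (\<Sum>n<N. g3 n) + cmod (\<Sum>n<N. g4 n))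
      \<longlonglongrightarrow> cmod S1 + cmod S2 + cmod S3 + cmod S4"
    using assms(1-4) unfolding sums_def by (intro tendsto_intros)
  show ?thesis
  proof (rule tendsto_upperbound[OF l], rule always_eventually, rule allI)
    fix N
    have "cmod (\<Sum>n<N. g1 n) + cmod (\<Sum>n<N. g2 n) + cmod (\<Sum>n<N. g3 n) + cmod (\<Sum>n<N. g4 n)
       \<le> (\<Sum>n<N. cmod (g1 n)) + (\<Sum>n<N. cmod (g2 n)) + (\<Sum>n<N. cmod (g3 n)) + (\<Sum>n<N. cmod (g4 n))"
      by (intro add_mono norm_sum)
    also have "\<dots> = (\<Sum>n<N. cmod (g1 n) + cmod (g2 n) + cmod (g3 n) + cmod (g4 n))"
      by (simp add: sum.distrib)
    also have "\<dots> \<le> M" by (rule assms(5))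
    finally show "cmod (\<Sum>n<N. g1 n) + cmod (\<Sum>n<N. g2 n) + cmod (\<Sum>n<N. g3 n) + cmod (\<Sum>n<N. g4 n) \<le> M" .
  qed simp
qed



lemma ps_deriv:
  assumes "g holomorphic_on ball 0 1" "z \<in> ball 0 1"
  shows "(\<lambda>n. (deriv ^^ (n + k)) g 0 / fact n * z ^ n) sums (deriv ^^ k) g z"
proof -
  have "(deriv ^^ k) g holomorphic_on ball 0 1" using assms by (intro holomorphic_intros) auto
  from holomorphic_power_series[OF this, of z] assms
  show ?thesis by (simp add: dd_add)
qed

lemma series_bound:
  fixes s t :: "complex \<Rightarrow> complex" and K :: real
  assumes hs: "s holomorphic_on ball 0 1" and ht: "t holomorphic_on ball 0 1"
    and s1: "deriv s 0 = 1" and t1: "deriv t 0 = 0"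
    and cb: "\<And>n. cmod ((deriv ^^ (Suc (Suc n))) s 0) / fact (Suc (Suc n)) + cmod ((deriv ^^ (Suc (Suc n))) t 0) / fact (Suc (Suc n)) \<le> K"
    and z: "z \<in> ball 0 1"
  shows "cmod (z * deriv s z - z) + cmod (z^2 * deriv (deriv s) z) + cmod (z * deriv t z) + cmod (z^2 * deriv (deriv t) z)
      \<le> K * cmod z * (cmod z * ((cmod z)^2 - 3 * cmod z + 4) / (1 - cmod z)^3)"
proof -
  define x where "x = cmod z"
  have x: "0 \<le> x" "x < 1" using z unfolding x_def by auto
  define a where "a = (\<lambda>n. cmod ((deriv ^^ n) s 0) / fact n)"
  define b where "b = (\<lambda>n. cmod ((deriv ^^ n) t 0) / fact n)"
  have K0: "0 \<le> K" using cb[of 0] by (smt (verit) divide_nonneg_nonneg norm_ge_zero fact_ge_zero)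
  have "(\<lambda>n. z * ((deriv ^^ (n + 1)) s 0 / fact n * z ^ n)) sums (z * deriv s z)"
    using sums_mult[OF ps_deriv[OF hs z, of 1]] by simp
  hence "(\<lambda>n. (deriv ^^ (Suc n)) s 0 / fact n * z ^ (Suc n)) sums (z * deriv s z)"
    by (simp add: algebra_simps)
  hence S1: "(\<lambda>n. (deriv ^^ (Suc (Suc n))) s 0 / fact (Suc n) * z ^ (Suc (Suc n))) sums (z * deriv s z - z)"
    by (subst sums_Suc_iff) (simp add: s1)
  have "(\<lambda>n. z^2 * ((deriv ^^ (n + 2)) s 0 / fact n * z ^ n)) sums (z^2 * (deriv ^^ 2) s z)"
    using sums_mult[OF ps_deriv[OF hs z, of 2]] by simp
  hence S2: "(\<lambda>n. (deriv ^^ (Suc (Suc n))) s 0 / fact n * z ^ (Suc (Suc n))) sums (z^2 * deriv (deriv s) z)"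
    by (simp add: algebra_simps numeral_2_eq_2)
  have "(\<lambda>n. z * ((deriv ^^ (n + 1)) t 0 / fact n * z ^ n)) sums (z * deriv t z)"
    using sums_mult[OF ps_deriv[OF ht z, of 1]] by simp
  hence "(\<lambda>n. (deriv ^^ (Suc n)) t 0 / fact n * z ^ (Suc n)) sums (z * deriv t z)"
    by (simp add: algebra_simps)
  hence S3: "(\<lambda>n. (deriv ^^ (Suc (Suc n))) t 0 / fact (Suc n) * z ^ (Suc (Suc n))) sums (z * deriv t z)"
    by (subst sums_Suc_iff) (simp add: t1)
  have "(\<lambda>n. z^2 * ((deriv ^^ (n + 2)) t 0 / fact n * z ^ n)) sums (z^2 * (deriv ^^ 2) t z)"
    using sums_mult[OF ps_deriv[OF ht z, of 2]] by simp
  hence S4: "(\<lambda>n. (deriv ^^ (Suc (Suc n))) t 0 / fact n * z ^ (Suc (Suc n))) sums (z^2 * deriv (deriv t) z)"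
    by (simp add: algebra_simps numeral_2_eq_2)
  show ?thesis unfolding x_def[symmetric]
  proof (rule four_sums_bound[OF S1 S2 S3 S4])
    fix N
    have fa: "fact (Suc (Suc n)) = real (Suc (Suc n)) * fact (Suc n)" "fact (Suc n) = real (Suc n) * fact n" for n :: nat
      by simp_all
    have t: "cmod ((deriv ^^ (Suc (Suc n))) s 0 / fact (Suc n) * z ^ (Suc (Suc n))) +
          cmod ((deriv ^^ (Suc (Suc n))) s 0 / fact n * z ^ (Suc (Suc n))) +
          cmod ((deriv ^^ (Suc (Suc n))) t 0 / fact (Suc n) * z ^ (Suc (Suc n))) +
          cmod ((deriv ^^ (Suc (Suc n))) t 0 / fact n * z ^ (Suc (Suc n)))
        = (real n + 2)^2 * (a (Suc (Suc n)) + b (Suc (Suc n))) * x ^ (Suc (Suc n))" for n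
    proof -
      have alg: "A / (real (Suc n) * f) * X + A / f * X + B / (real (Suc n) * f) * X + B / f * X
         = (real n + 2)^2 * (A / (real (Suc (Suc n)) * (real (Suc n) * f)) + B / (real (Suc (Suc n)) * (real (Suc n) * f))) * X"
        if "f > 0" for A B f X :: real
      proof -
        define p where "p = real n + 1"
        have p: "p > 0" "real (Suc n) = p" "real (Suc (Suc n)) = p + 1" "real n + 2 = p + 1" unfolding p_def by auto
        have nz: "p * f \<noteq> 0" "p + 1 \<noteq> 0" "f \<noteq> 0" using p that by auto
        have e1: "(p+1)^2 * (C/((p+1)*(p*f))) = (p+1)*C/(p*f)" for C
          using nz by (simp add: power2_eq_square)
        have e2: "C/(p*f) + C/f = (p+1)*C/(p*f)" for C
          using nz by (simp add: field_simps)
        have "(p+1)^2 * (A/((p+1)*(p*f)) + B/((p+1)*(p*f))) * X = ((p+1)*A/(p*f) + (p+1)*B/(p*f)) * X"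
          using e1[of A] e1[of B] by (simp add: distrib_left)
        also have "\<dots> = (A/(p*f) + A/f + (B/(p*f) + B/f)) * X" unfolding e2 ..
        finally show ?thesis unfolding p by (simp add: algebra_simps)
      qed
      show ?thesis unfolding a_def b_def x_def norm_mult norm_divide norm_power norm_fact fa
        by (rule alg) simp
    qed
    have "(\<Sum>n<N. (real n + 2)^2 * (a (Suc (Suc n)) + b (Suc (Suc n))) * x ^ (Suc (Suc n)))
        \<le> (\<Sum>n<N. K * x * ((real n + 2)^2 * x ^ (n+1)))"
    proof (rule sum_mono)
      fix n
      have "(a (Suc (Suc n)) + b (Suc (Suc n))) \<le> K" using cb[of n] unfolding a_def b_def .
      then have "(real n + 2)^2 * (a (Suc (Suc n)) + b (Suc (Suc n))) * x ^ (Suc (Suc n)) \<le> (real n + 2)^2 * K * x ^ (Suc (Suc n))"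
        using x by (intro mult_right_mono mult_left_mono) auto
      then show "(real n + 2)^2 * (a (Suc (Suc n)) + b (Suc (Suc n))) * x ^ (Suc (Suc n)) \<le> K * x * ((real n + 2)^2 * x ^ (n+1))"
        by (simp add: algebra_simps)
    qed
    also have "\<dots> = K * x * (\<Sum>n<N. (real n + 2)^2 * x ^ (n+1))" by (simp add: sum_distrib_left)
    also have "\<dots> \<le> K * x * (x * (x^2 - 3 * x + 4) / (1 - x)^3)"
      using psum_le[OF x] K0 x by (intro mult_left_mono) auto
    finally show "(\<Sum>n<N. cmod ((deriv ^^ (Suc (Suc n))) s 0 / fact (Suc n) * z ^ (Suc (Suc n))) +
          cmod ((deriv ^^ (Suc (Suc n))) s 0 / fact n * z ^ (Suc (Suc n))) +
          cmod ((deriv ^^ (Suc (Suc n))) t 0 / fact (Suc n) * z ^ (Suc (Suc n))) +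
          cmod ((deriv ^^ (Suc (Suc n))) t 0 / fact n * z ^ (Suc (Suc n))))
        \<le> K * x * (x * (x^2 - 3 * x + 4) / (1 - x)^3)" unfolding t .
  qed
qed



lemma norm_sum_diff_sq:
  fixes N D :: complex
  shows "(cmod (N + D))^2 - (cmod (N - D))^2 = 4 * Re (N * cnj D)"
  unfolding cmod_power2 by (simp add: power2_eq_square algebra_simps)

lemma hull_face:
  fixes n p w :: complex and S :: "complex set"
  assumes w: "w \<in> convex hull S" and ge: "\<And>y. y \<in> S \<Longrightarrow> n \<bullet> (y - p) \<ge> 0"
    and eq: "\<And>y. y \<in> S \<Longrightarrow> n \<bullet> (y - p) = 0 \<Longrightarrow> y = p" and wp: "n \<bullet> (w - p) = 0"
  shows "w = p"
proof -
  obtain T u where T: "finite T" "T \<subseteq> S" "\<And>x. x \<in> T \<Longrightarrow> 0 \<le> u x" "sum u T = 1"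
    "(\<Sum>v\<in>T. u v *\<^sub>R v) = w"
    using w unfolding convex_hull_explicit by blast
  have "w - p = (\<Sum>v\<in>T. u v *\<^sub>R (v - p))"
    using T(4,5) by (simp add: scaleR_diff_right sum_subtractf scaleR_sum_left[symmetric])
  hence "n \<bullet> (w - p) = (\<Sum>v\<in>T. u v * (n \<bullet> (v - p)))" by (simp add: inner_sum_right)
  hence "(\<Sum>v\<in>T. u v * (n \<bullet> (v - p))) = 0" using wp by simp
  hence z: "\<forall>v\<in>T. u v * (n \<bullet> (v - p)) = 0"
    using T ge by (subst sum_nonneg_eq_0_iff[symmetric]) (auto intro!: mult_nonneg_nonneg)
  have "\<forall>v\<in>T. u v *\<^sub>R v = u v *\<^sub>R p"
  proof
    fix v assume v: "v \<in> T"
    show "u v *\<^sub>R v = u v *\<^sub>R p"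
    proof (cases "u v = 0")
      case False
      then have "n \<bullet> (v - p) = 0" using z v by auto
      then have "v = p" using eq v T(2) by blast
      then show ?thesis by simp
    qed simp
  qed
  hence "(\<Sum>v\<in>T. u v *\<^sub>R v) = (\<Sum>v\<in>T. u v *\<^sub>R p)" by (intro sum.cong) auto
  hence "w = (\<Sum>v\<in>T. u v *\<^sub>R p)" using T(5) by simp
  also have "\<dots> = p" using T(4) by (simp add: scaleR_sum_left[symmetric])
  finally show ?thesis .
qed

context
  fixes s t :: "complex \<Rightarrow> complex" and \<rho> :: real
  assumes hs: "s holomorphic_on ball 0 1" and ht: "t holomorphic_on ball 0 1"
    and \<rho>: "0 < \<rho>" "\<rho> < 1"
    and small: "\<And>z. cmod z = \<rho> \<Longrightarrow> cmod (z * deriv s z - z) + cmod (z^2 * deriv (deriv s) z)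
        + cmod (z * deriv t z) + cmod (z^2 * deriv (deriv t) z) < \<rho>"
begin

definition "zz \<phi> = of_real \<rho> * exp (\<i> * of_real \<phi>)"
definition "FF \<phi> = s (zz \<phi>) + cnj (t (zz \<phi>))"
definition "DD \<phi> = zz \<phi> * deriv s (zz \<phi>) - cnj (zz \<phi> * deriv t (zz \<phi>))"
definition "NN \<phi> = zz \<phi> * deriv s (zz \<phi>) + (zz \<phi>)^2 * deriv (deriv s) (zz \<phi>)
    + cnj (zz \<phi> * deriv t (zz \<phi>) + (zz \<phi>)^2 * deriv (deriv t) (zz \<phi>))"

lemma zz_norm: "cmod (zz \<phi>) = \<rho>"
  unfolding zz_def using \<rho> by (simp add: norm_mult)

lemma zz_ball: "zz \<phi> \<in> ball 0 1"
  using zz_norm \<rho> by simp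

lemma zz_per: "zz (\<phi> + 2 * pi) = zz \<phi>"
proof -
  have "exp (\<i> * (2 * complex_of_real pi)) = 1" using exp_two_pi_i by (simp add: ac_simps)
  then show ?thesis unfolding zz_def by (simp add: distrib_left exp_add)
qed

lemma zz_deriv: "(zz has_vector_derivative (\<i> * zz \<phi>)) (at \<phi>)"
proof -
  have "((\<lambda>w. of_real \<rho> * exp (\<i> * w)) has_field_derivative (of_real \<rho> * (exp (\<i> * of_real \<phi>) * \<i>))) (at (of_real \<phi>))"
    by (auto intro!: derivative_eq_intros)
  from has_vector_derivative_real_field[OF this] show ?thesis unfolding zz_def by (simp add: ac_simps)
qed

lemma comp_zz_deriv:
  assumes "g holomorphic_on ball 0 1"
  shows "((\<lambda>\<phi>. g (zz \<phi>)) has_vector_derivative (\<i> * zz \<phi> * deriv g (zz \<phi>))) (at \<phi>)"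
proof -
  have "(g has_field_derivative deriv g (zz \<phi>)) (at (zz \<phi>))"
    using holomorphic_derivI[OF assms open_ball zz_ball, of \<phi> UNIV] by simp
  from field_vector_diff_chain_at[OF zz_deriv this] show ?thesis by (simp add: o_def)
qed

lemma FF_deriv: "(FF has_vector_derivative (\<i> * DD \<phi>)) (at \<phi>)"
proof -
  have "((\<lambda>\<phi>. s (zz \<phi>) + cnj (t (zz \<phi>))) has_vector_derivative
      (\<i> * zz \<phi> * deriv s (zz \<phi>) + cnj (\<i> * zz \<phi> * deriv t (zz \<phi>)))) (at \<phi>)"
    by (intro has_vector_derivative_add has_vector_derivative_cnj comp_zz_deriv hs ht)
  then show ?thesis unfolding FF_def[abs_def] DD_def
    by (rule has_vector_derivative_eq_rhs) (simp add: algebra_simps)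
qed

lemma DD_deriv: "(DD has_vector_derivative (\<i> * NN \<phi>)) (at \<phi>)"
proof -
  have hs': "deriv s holomorphic_on ball 0 1" and ht': "deriv t holomorphic_on ball 0 1"
    using hs ht by (auto intro: holomorphic_intros)
  have "((\<lambda>\<phi>. zz \<phi> * deriv s (zz \<phi>) - cnj (zz \<phi> * deriv t (zz \<phi>))) has_vector_derivative
      (zz \<phi> * (\<i> * zz \<phi> * deriv (deriv s) (zz \<phi>)) + \<i> * zz \<phi> * deriv s (zz \<phi>)
       - cnj (zz \<phi> * (\<i> * zz \<phi> * deriv (deriv t) (zz \<phi>)) + \<i> * zz \<phi> * deriv t (zz \<phi>)))) (at \<phi>)"
    by (intro has_vector_derivative_diff has_vector_derivative_cnj has_vector_derivative_mult
        comp_zz_deriv hs' ht' zz_deriv)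
  then show ?thesis unfolding DD_def[abs_def] NN_def
    by (rule has_vector_derivative_eq_rhs) (simp add: algebra_simps power2_eq_square)
qed

lemma DD_per: "DD (\<phi> + 2 * pi) = DD \<phi>" unfolding DD_def zz_per ..
lemma FF_per: "FF (\<phi> + 2 * pi) = FF \<phi>" unfolding FF_def zz_per ..

lemma DD_pos: "Re (DD \<phi> / zz \<phi>) > 0"
proof -
  define z where "z = zz \<phi>"
  have nz: "cmod z = \<rho>" unfolding z_def by (rule zz_norm)
  have z0: "z \<noteq> 0" using nz \<rho> by auto
  have "DD \<phi> / z - 1 = (z * deriv s z - z) / z - cnj (z * deriv t z) / z"
    unfolding DD_def z_def[symmetric] using z0 by (simp add: field_simps)
  hence "cmod (DD \<phi> / z - 1) \<le> cmod (z * deriv s z - z) / \<rho> + cmod (z * deriv t z) / \<rho>"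
    using norm_triangle_ineq4[of "(z * deriv s z - z) / z" "cnj (z * deriv t z) / z"]
    by (simp add: norm_divide nz norm_mult)
  also have "\<dots> < 1"
  proof -
    have "cmod (z * deriv s z - z) + cmod (z * deriv t z) < \<rho>"
      using small[OF nz] norm_ge_zero[of "z^2 * deriv (deriv s) z"] norm_ge_zero[of "z^2 * deriv (deriv t) z"]
      by linarith
    then show ?thesis using \<rho> by (simp add: add_divide_distrib[symmetric] divide_less_eq)
  qed
  finally have "cmod (DD \<phi> / z - 1) < 1" .
  moreover have "\<bar>Re (DD \<phi> / z - 1)\<bar> \<le> cmod (DD \<phi> / z - 1)" by (rule abs_Re_le_cmod)
  ultimately show ?thesis unfolding z_def by simp
qed

lemma DD_nz: "DD \<phi> \<noteq> 0"
  using DD_pos[of \<phi>] by auto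

lemma NN_pos: "Re (NN \<phi> * cnj (DD \<phi>)) > 0"
proof -
  define z where "z = zz \<phi>"
  have nz: "cmod z = \<rho>" unfolding z_def by (rule zz_norm)
  define u1 where "u1 = z * deriv s z - z"
  define u2 where "u2 = z^2 * deriv (deriv s) z"
  define v1 where "v1 = z * deriv t z"
  define v2 where "v2 = z^2 * deriv (deriv t) z"
  have sm: "cmod u1 + cmod u2 + cmod v1 + cmod v2 < \<rho>" unfolding u1_def u2_def v1_def v2_def using small[OF nz] .
  have D: "DD \<phi> = z + u1 - cnj v1" unfolding DD_def z_def[symmetric] u1_def v1_def by simp
  have N: "NN \<phi> = z + u1 + u2 + cnj (v1 + v2)" unfolding NN_def z_def[symmetric] u1_def u2_def v1_def v2_def by simp
  have p: "NN \<phi> + DD \<phi> = 2 * z + (2 * u1 + u2 + cnj v2)" unfolding N D by simp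
  have m: "NN \<phi> - DD \<phi> = u2 + cnj (2 * v1 + v2)" unfolding N D by simp
  have "cmod (2 * u1 + u2 + cnj v2) \<le> 2 * cmod u1 + cmod u2 + cmod v2"
    by (metis complex_mod_cnj norm_triangle_le norm_triangle_ineq add_mono order_refl norm_mult
        norm_numeral mult_2 add.commute)
  hence a: "cmod (NN \<phi> + DD \<phi>) \<ge> 2 * \<rho> - (2 * cmod u1 + cmod u2 + cmod v2)"
    unfolding p using norm_diff_ineq[of "2 * z" "2 * u1 + u2 + cnj v2"] nz
    by (simp add: norm_mult)
  have "cmod (NN \<phi> - DD \<phi>) \<le> cmod u2 + cmod (2 * v1 + v2)" unfolding m
    using norm_triangle_ineq[of u2 "cnj (2 * v1 + v2)"] by (simp only: complex_mod_cnj)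
  also have "cmod (2 * v1 + v2) \<le> 2 * cmod v1 + cmod v2"
    using norm_triangle_ineq[of "2 * v1" v2] by (simp add: norm_mult)
  finally have b: "cmod (NN \<phi> - DD \<phi>) \<le> cmod u2 + 2 * cmod v1 + cmod v2" by simp
  have lt: "cmod (NN \<phi> - DD \<phi>) < cmod (NN \<phi> + DD \<phi>)" using a b sm by linarith
  have "(cmod (NN \<phi> - DD \<phi>))^2 < (cmod (NN \<phi> + DD \<phi>))^2"
    using lt by (intro power_strict_mono) auto
  then show ?thesis using norm_sum_diff_sq[of "NN \<phi>" "DD \<phi>"] by linarith
qed


definition "WW \<phi> = DD \<phi> * (exp (- (\<i> * of_real \<phi>)) / of_real \<rho>)"
definition "LL \<phi> = \<i> * of_real \<phi> + Ln (WW \<phi>)"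
definition "Phi \<phi> = Im (LL \<phi>)"

lemma WW_eq: "WW \<phi> = DD \<phi> / zz \<phi>"
proof -
  have "\<rho> \<noteq> 0" using \<rho> by simp
  then show ?thesis unfolding WW_def zz_def by (simp add: exp_minus field_simps)
qed

lemma WW_pos: "Re (WW \<phi>) > 0" unfolding WW_eq by (rule DD_pos)

lemma WW_deriv: "\<exists>W'. (WW has_vector_derivative W') (at \<phi>)"
proof -
  have "((\<lambda>w. exp (- (\<i> * w)) / of_real \<rho>) has_field_derivative (exp (- (\<i> * of_real \<phi>)) * (- \<i>) / of_real \<rho>)) (at (of_real \<phi>))"
    using \<rho> by (auto intro!: derivative_eq_intros)
  from has_vector_derivative_real_field[OF this]
  have e: "((\<lambda>\<phi>. exp (- (\<i> * of_real \<phi>)) / of_real \<rho>) has_vector_derivative (exp (- (\<i> * of_real \<phi>)) * (- \<i>) / of_real \<rho>)) (at \<phi>)"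
    by simp
  show ?thesis unfolding WW_def[abs_def] using has_vector_derivative_mult[OF DD_deriv e] by blast
qed

lemma LL_deriv: "\<exists>L'. (LL has_vector_derivative L') (at \<phi>)"
proof -
  obtain W' where W: "(WW has_vector_derivative W') (at \<phi>)" using WW_deriv by blast
  have "WW \<phi> \<notin> \<real>\<^sub>\<le>\<^sub>0" using WW_pos[of \<phi>] by (auto simp: complex_nonpos_Reals_iff)
  from field_vector_diff_chain_at[OF W has_field_derivative_Ln[OF this]]
  have l: "((\<lambda>\<phi>. Ln (WW \<phi>)) has_vector_derivative (W' * inverse (WW \<phi>))) (at \<phi>)" by (simp add: o_def)
  have "((\<lambda>w. \<i> * w) has_field_derivative \<i>) (at (of_real \<phi>))"
    by (auto intro!: derivative_eq_intros)
  from has_vector_derivative_real_field[OF this]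
  have i: "((\<lambda>\<phi>. \<i> * of_real \<phi>) has_vector_derivative \<i>) (at \<phi>)" by simp
  show ?thesis unfolding LL_def[abs_def] using has_vector_derivative_add[OF i l] by blast
qed

lemma exp_LL: "exp (LL \<phi>) = DD \<phi> / of_real \<rho>"
proof -
  have "WW \<phi> \<noteq> 0" using WW_pos[of \<phi>] by auto
  then have "exp (LL \<phi>) = exp (\<i> * of_real \<phi>) * WW \<phi>" unfolding LL_def by (simp add: exp_add)
  also have "\<dots> = DD \<phi> / of_real \<rho>" unfolding WW_def by (simp add: exp_minus field_simps)
  finally show ?thesis .
qed

lemma DD_exp: "DD \<phi> = of_real \<rho> * exp (LL \<phi>)"
  unfolding exp_LL using \<rho> by simp

lemma LL_deriv_eq: "(LL has_vector_derivative (\<i> * NN \<phi> / DD \<phi>)) (at \<phi>)"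
proof -
  obtain L' where L: "(LL has_vector_derivative L') (at \<phi>)" using LL_deriv by blast
  from field_vector_diff_chain_at[OF L DERIV_exp[of "LL \<phi>"]]
  have a: "((\<lambda>\<phi>. exp (LL \<phi>)) has_vector_derivative (L' * exp (LL \<phi>))) (at \<phi>)" by (simp add: o_def)
  have "((\<lambda>\<phi>. DD \<phi> * inverse (of_real \<rho>)) has_vector_derivative (\<i> * NN \<phi> * inverse (of_real \<rho>))) (at \<phi>)"
    by (rule has_vector_derivative_mult_left[OF DD_deriv])
  hence b: "((\<lambda>\<phi>. exp (LL \<phi>)) has_vector_derivative (\<i> * NN \<phi> * inverse (of_real \<rho>))) (at \<phi>)"
    unfolding exp_LL by (simp add: field_simps)
  have "L' * exp (LL \<phi>) = \<i> * NN \<phi> * inverse (of_real \<rho>)" by (rule vector_derivative_unique_at[OF a b])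
  hence "L' = \<i> * NN \<phi> / DD \<phi>" unfolding exp_LL using DD_nz[of \<phi>] \<rho> by (simp add: field_simps)
  then show ?thesis using L by simp
qed

lemma Phi_deriv: "(Phi has_real_derivative (Re (NN \<phi> / DD \<phi>))) (at \<phi>)"
proof -
  have "((\<lambda>\<phi>. Im (LL \<phi>)) has_real_derivative (Im (\<i> * NN \<phi> / DD \<phi>))) (at \<phi>)"
    by (rule has_field_derivative_Im[OF LL_deriv_eq])
  moreover have "Im (\<i> * NN \<phi> / DD \<phi>) = Re (NN \<phi> / DD \<phi>)"
    by (simp add: times_divide_eq_right[symmetric] del: times_divide_eq_right)
  ultimately show ?thesis unfolding Phi_def[abs_def] by simp
qed

lemma Phi_deriv_pos: "Re (NN \<phi> / DD \<phi>) > 0"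
proof -
  have "Re (NN \<phi> / DD \<phi>) = Re (NN \<phi> * cnj (DD \<phi>)) / (cmod (DD \<phi>))^2"
    by (simp add: Re_divide cmod_power2)
  moreover have "(cmod (DD \<phi>))^2 > 0" using DD_nz[of \<phi>] by simp
  ultimately show ?thesis using NN_pos[of \<phi>] by simp
qed

lemma Phi_mono: "a < b \<Longrightarrow> Phi a < Phi b"
  by (rule DERIV_pos_imp_increasing[of a b Phi]) (use Phi_deriv Phi_deriv_pos in blast)+

lemma Phi_per: "Phi (\<phi> + 2 * pi) = Phi \<phi> + 2 * pi"
proof -
  have "WW (\<phi> + 2 * pi) = WW \<phi>"
  proof -
    have "exp (- (\<i> * of_real (\<phi> + 2 * pi))) = exp (- (\<i> * of_real \<phi>))"
    proof -
      have e: "exp (\<i> * (2 * complex_of_real pi)) = 1"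
        using exp_two_pi_i by (simp add: ac_simps)
      have "exp (- (\<i> * of_real (\<phi> + 2 * pi))) = exp (- (\<i> * of_real \<phi>)) / exp (\<i> * (2 * complex_of_real pi))"
        by (simp add: distrib_left exp_diff)
      then show ?thesis unfolding e by simp
    qed
    then show ?thesis unfolding WW_def DD_per by simp
  qed
  then show ?thesis unfolding Phi_def LL_def by simp
qed

lemma Im_cnj_DD: "Im (cnj (DD a) * DD b) = \<rho>^2 * exp (Re (LL a) + Re (LL b)) * sin (Phi b - Phi a)"
proof -
  have "cnj (DD a) * DD b = of_real (\<rho>^2) * exp (cnj (LL a) + LL b)"
    unfolding DD_exp by (simp add: exp_cnj[symmetric] exp_add power2_eq_square)
  then show ?thesis unfolding Phi_def by (simp add: Im_exp)
qed


definition "HH \<theta> u = Im (cnj (\<i> * DD \<theta>) * (FF (\<theta> + u) - FF \<theta>))"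

lemma HH_deriv: "((HH \<theta>) has_real_derivative (Im (cnj (DD \<theta>) * DD (\<theta> + u)))) (at u)"
proof -
  have "((\<lambda>u. \<theta> + u) has_real_derivative 1) (at u)"
    by (auto intro!: derivative_eq_intros)
  hence sh: "((\<lambda>u. \<theta> + u) has_vector_derivative 1) (at u)"
    using has_real_derivative_iff_has_vector_derivative by blast
  from vector_diff_chain_at[OF sh FF_deriv[of "\<theta> + u"]]
  have f: "((\<lambda>u. FF (\<theta> + u)) has_vector_derivative (\<i> * DD (\<theta> + u))) (at u)" by (simp add: o_def)
  have "((\<lambda>u. cnj (\<i> * DD \<theta>) * (FF (\<theta> + u) - FF \<theta>)) has_vector_derivative
       (cnj (\<i> * DD \<theta>) * (\<i> * DD (\<theta> + u) - 0))) (at u)"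
    by (intro has_vector_derivative_mult_right has_vector_derivative_diff f has_vector_derivative_const)
  from has_field_derivative_Im[OF this]
  show ?thesis unfolding HH_def[abs_def] by simp
qed

lemma HH_zero: "HH \<theta> 0 = 0" unfolding HH_def by simp
lemma HH_2pi: "HH \<theta> (2 * pi) = 0" unfolding HH_def FF_per by simp

lemma HH_deriv_sign:
  "Im (cnj (DD \<theta>) * DD (\<theta> + v)) > 0 \<longleftrightarrow> sin (Phi (\<theta> + v) - Phi \<theta>) > 0"
  "Im (cnj (DD \<theta>) * DD (\<theta> + v)) < 0 \<longleftrightarrow> sin (Phi (\<theta> + v) - Phi \<theta>) < 0"
proof -
  have p: "\<rho>^2 * exp (Re (LL \<theta>) + Re (LL (\<theta> + v))) > 0" using \<rho> by simp
  show "Im (cnj (DD \<theta>) * DD (\<theta> + v)) > 0 \<longleftrightarrow> sin (Phi (\<theta> + v) - Phi \<theta>) > 0"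
    unfolding Im_cnj_DD using p zero_less_mult_pos by (metis mult_pos_pos)
  show "Im (cnj (DD \<theta>) * DD (\<theta> + v)) < 0 \<longleftrightarrow> sin (Phi (\<theta> + v) - Phi \<theta>) < 0"
    unfolding Im_cnj_DD using p by (simp add: mult_less_0_iff)
qed

lemma support:
  assumes u: "0 < u" "u < 2 * pi"
  shows "HH \<theta> u > 0"
proof -
  define \<Delta> where "\<Delta> v = Phi (\<theta> + v) - Phi \<theta>" for v
  have \<Delta>m: "\<Delta> a < \<Delta> b" if "a < b" for a b unfolding \<Delta>_def using Phi_mono[of "\<theta> + a" "\<theta> + b"] that by simp
  have \<Delta>0: "\<Delta> 0 = 0" unfolding \<Delta>_def by simp
  have \<Delta>2: "\<Delta> (2 * pi) = 2 * pi" unfolding \<Delta>_def using Phi_per[of \<theta>] by (simp add: add.commute)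
  have cont: "continuous_on {a..b} (HH \<theta>)" for a b
    by (rule DERIV_atLeastAtMost_imp_continuous_on) (use HH_deriv in blast)
  show ?thesis
  proof (cases "\<Delta> u \<le> pi")
    case True
    have "HH \<theta> 0 < HH \<theta> u"
    proof (rule DERIV_pos_imp_increasing_open[OF u(1) _ cont])
      fix v assume v: "0 < v" "v < u"
      have "0 < \<Delta> v" "\<Delta> v < pi" using \<Delta>m[OF v(1)] \<Delta>m[OF v(2)] \<Delta>0 True by auto
      hence "sin (\<Delta> v) > 0" by (rule sin_gt_zero)
      then show "\<exists>y. DERIV (HH \<theta>) v :> y \<and> 0 < y"
        using HH_deriv[of \<theta> v] HH_deriv_sign(1)[of \<theta> v] unfolding \<Delta>_def by blast
    qed
    then show ?thesis using HH_zero by simp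
  next
    case False
    have "(\<lambda>v. - HH \<theta> v) u < (\<lambda>v. - HH \<theta> v) (2 * pi)"
    proof (rule DERIV_pos_imp_increasing_open[OF u(2)])
      fix v assume v: "u < v" "v < 2 * pi"
      have "pi < \<Delta> v" "\<Delta> v < 2 * pi" using \<Delta>m[OF v(1)] \<Delta>m[OF v(2)] \<Delta>2 False by auto
      hence "sin (\<Delta> v) < 0" by (rule sin_lt_zero)
      then show "\<exists>y. DERIV (\<lambda>v. - HH \<theta> v) v :> y \<and> 0 < y"
        using DERIV_minus[OF HH_deriv[of \<theta> v]] HH_deriv_sign(2)[of \<theta> v] unfolding \<Delta>_def by force
    next
      show "continuous_on {u..2 * pi} (\<lambda>v. - HH \<theta> v)" using cont by (intro continuous_intros)
    qed
    then show ?thesis using HH_2pi by simp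
  qed
qed


definition "nv \<theta> = - DD \<theta>"

lemma HH_inner: "HH \<theta> u = nv \<theta> \<bullet> (FF (\<theta> + u) - FF \<theta>)"
  unfolding HH_def nv_def inner_complex_def by (simp add: algebra_simps)

lemma zz_per_int: "zz (x + 2 * pi * of_int k) = zz x"
proof -
  have "exp ((2 * of_int k * pi) * \<i>) = 1" by (rule exp_integer_2pi) simp
  then have "exp (\<i> * (2 * complex_of_real pi * of_int k)) = 1" by (simp add: ac_simps)
  then show ?thesis unfolding zz_def by (simp add: distrib_left exp_add)
qed

lemma FF_per_int: "FF (x + 2 * pi * of_int k) = FF x" unfolding FF_def zz_per_int ..

lemma reduce:
  obtains u where "0 \<le> u" "u < 2 * pi" "FF \<phi> = FF (\<theta> + u)" "zz \<phi> = zz (\<theta> + u)"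
proof -
  define k where "k = \<lfloor>(\<phi> - \<theta>) / (2 * pi)\<rfloor>"
  define u where "u = (\<phi> - \<theta>) - 2 * pi * of_int k"
  have "of_int k \<le> (\<phi> - \<theta>) / (2 * pi)" "(\<phi> - \<theta>) / (2 * pi) < of_int k + 1"
    unfolding k_def by linarith+
  hence "2 * pi * of_int k \<le> \<phi> - \<theta>" "\<phi> - \<theta> < 2 * pi * (of_int k + 1)"
    using pi_gt_zero by (simp_all add: field_simps)
  hence "0 \<le> u" "u < 2 * pi" unfolding u_def by (simp_all add: algebra_simps)
  moreover have "\<theta> + u + 2 * pi * of_int k = \<phi>" unfolding u_def by simp
  hence "FF \<phi> = FF (\<theta> + u)" "zz \<phi> = zz (\<theta> + u)" using FF_per_int[of "\<theta> + u" k] zz_per_int[of "\<theta> + u" k] by simp_all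
  ultimately show ?thesis using that by blast
qed

lemma supp_ge: "nv \<theta> \<bullet> (FF \<phi> - FF \<theta>) \<ge> 0"
proof -
  obtain u where u: "0 \<le> u" "u < 2 * pi" "FF \<phi> = FF (\<theta> + u)" by (rule reduce)
  show ?thesis
  proof (cases "u = 0")
    case True then show ?thesis using u by simp
  next
    case False then show ?thesis using support[of u \<theta>] u unfolding HH_inner by simp
  qed
qed

lemma supp_eq: "nv \<theta> \<bullet> (FF \<phi> - FF \<theta>) = 0 \<Longrightarrow> FF \<phi> = FF \<theta> \<and> zz \<phi> = zz \<theta>"
proof -
  assume h: "nv \<theta> \<bullet> (FF \<phi> - FF \<theta>) = 0"
  obtain u where u: "0 \<le> u" "u < 2 * pi" "FF \<phi> = FF (\<theta> + u)" "zz \<phi> = zz (\<theta> + u)" by (rule reduce)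
  have "u = 0"
  proof (rule ccontr)
    assume "u \<noteq> 0"
    then show False using support[of u \<theta>] u h unfolding HH_inner by simp
  qed
  then show ?thesis using u by simp
qed

lemma FF_cont: "continuous_on A FF"
  using continuous_on_vector_derivative[of A FF "\<lambda>\<phi>. \<i> * DD \<phi>"] FF_deriv
  by (meson continuous_at_imp_continuous_on has_vector_derivative_continuous)

lemma min_normal:
  assumes a: "a \<noteq> 0" and m: "\<And>\<phi>. a \<bullet> FF \<theta> \<le> a \<bullet> FF \<phi>"
  shows "\<exists>c>0. a = c *\<^sub>R nv \<theta>"
proof -
  have eqR: "a \<bullet> w = Re (cnj a * w)" for w unfolding inner_complex_def by simp
  have "((\<lambda>\<phi>. cnj a * FF \<phi>) has_vector_derivative (cnj a * (\<i> * DD \<theta>))) (at \<theta>)"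
    by (rule has_vector_derivative_mult_right[OF FF_deriv])
  from has_field_derivative_Re[OF this]
  have d: "((\<lambda>\<phi>. a \<bullet> FF \<phi>) has_real_derivative Re (cnj a * (\<i> * DD \<theta>))) (at \<theta>)"
    unfolding eqR .
  have z: "Re (cnj a * (\<i> * DD \<theta>)) = 0"
    by (rule DERIV_local_min[OF d, of 1]) (use m in auto)
  define D where "D = DD \<theta>"
  have D0: "D \<noteq> 0" unfolding D_def by (rule DD_nz)
  define r where "r = Re (a / D)"
  have "Im (a / D) = 0" using z D0 unfolding D_def[symmetric]
    by (simp add: Im_divide algebra_simps)
  hence aD: "a = of_real r * D" unfolding r_def using D0
    by (metis complex_is_Real_iff nonzero_eq_divide_eq of_real_Re)
  have "0 \<le> a \<bullet> (FF (\<theta> + pi) - FF \<theta>)" using m[of "\<theta> + pi"] by (simp add: inner_diff_right)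
  also have "a \<bullet> (FF (\<theta> + pi) - FF \<theta>) = - r * HH \<theta> pi"
    unfolding HH_inner nv_def aD D_def inner_complex_def by (simp add: algebra_simps)
  finally have "0 \<le> - r * HH \<theta> pi" .
  moreover have "HH \<theta> pi > 0" by (rule support) auto
  ultimately have "- r \<ge> 0"
  proof -
    assume h1: "0 \<le> - r * HH \<theta> pi" and h2: "HH \<theta> pi > 0"
    show "- r \<ge> 0"
    proof (rule ccontr)
      assume "\<not> - r \<ge> 0"
      hence "r > 0" by simp
      hence "r * HH \<theta> pi > 0" using h2 by simp
      with h1 show False by simp
    qed
  qed
  moreover have "r \<noteq> 0" using a aD by auto
  ultimately have "- r > 0" by simp
  moreover have "a = (- r) *\<^sub>R nv \<theta>" unfolding aD nv_def D_def by (simp add: scaleR_conv_of_real)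
  ultimately show ?thesis by blast
qed


lemma sphere_eq: "sphere 0 \<rho> = zz ` {0..2*pi}"
proof
  show "zz ` {0..2*pi} \<subseteq> sphere 0 \<rho>" using zz_norm by auto
  show "sphere 0 \<rho> \<subseteq> zz ` {0..2*pi}"
  proof
    fix z :: complex assume "z \<in> sphere 0 \<rho>"
    hence nz: "cmod z = \<rho>" by simp
    have "z = of_real (cmod z) * exp (\<i> * of_real (Arg2pi z))" using Arg2pi[of z] unfolding is_Arg_def by blast
    hence "z = zz (Arg2pi z)" unfolding zz_def nz .
    moreover have "Arg2pi z \<in> {0..2*pi}" using Arg2pi[of z] by auto
    ultimately show "z \<in> zz ` {0..2*pi}" by blast
  qed
qed

lemma FF_in: "FF \<phi> \<in> FF ` {0..2*pi}"
proof -
  obtain u where "0 \<le> u" "u < 2 * pi" "FF \<phi> = FF (0 + u)" by (rule reduce)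
  then show ?thesis by auto
qed

lemma circle_result: "inj_on (harm s t) (sphere 0 \<rho>) \<and> convex_curve (harm s t ` sphere 0 \<rho>)"
proof -
  have hz: "harm s t (zz \<phi>) = FF \<phi>" for \<phi> unfolding harm_def FF_def ..
  have img: "harm s t ` sphere 0 \<rho> = FF ` {0..2*pi}" unfolding sphere_eq image_image hz ..
  have inj: "inj_on (harm s t) (sphere 0 \<rho>)"
  proof (rule inj_onI)
    fix z1 z2 assume z: "z1 \<in> sphere 0 \<rho>" "z2 \<in> sphere 0 \<rho>" "harm s t z1 = harm s t z2"
    obtain \<phi>1 \<phi>2 where p: "z1 = zz \<phi>1" "z2 = zz \<phi>2" using z(1,2) unfolding sphere_eq by blast
    have "FF \<phi>2 = FF \<phi>1" using z(3) unfolding p hz by simp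
    hence "nv \<phi>1 \<bullet> (FF \<phi>2 - FF \<phi>1) = 0" by simp
    then show "z1 = z2" using supp_eq[of \<phi>1 \<phi>2] p by simp
  qed
  define S where "S = FF ` {0..2*pi}"
  define K where "K = convex hull S"
  have cS: "compact S" unfolding S_def by (intro compact_continuous_image FF_cont compact_Icc)
  have cK: "compact K" unfolding K_def by (rule compact_convex_hull[OF cS])
  have FS: "FF \<phi> \<in> S" for \<phi> unfolding S_def by (rule FF_in)
  have SK: "S \<subseteq> K" unfolding K_def by (rule hull_subset)
  have hp: "nv \<theta> \<bullet> (w - FF \<theta>) \<ge> 0" if "w \<in> K" for \<theta> w
  proof -
    have "K \<subseteq> {w. nv \<theta> \<bullet> w \<ge> nv \<theta> \<bullet> FF \<theta>}" unfolding K_def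
    proof (rule hull_minimal)
      show "S \<subseteq> {w. nv \<theta> \<bullet> w \<ge> nv \<theta> \<bullet> FF \<theta>}"
        unfolding S_def using supp_ge[of \<theta>] by (auto simp: inner_diff_right)
    qed (rule convex_halfspace_ge)
    then show ?thesis using that by (auto simp: inner_diff_right)
  qed
  have nvnz: "nv \<theta> \<noteq> 0" for \<theta> unfolding nv_def using DD_nz by simp
  have intK: "interior K \<noteq> {}"
  proof
    assume "interior K = {}"
    then obtain a b where a: "a \<noteq> 0" "K \<subseteq> {x. a \<bullet> x = b}"
      using empty_interior_subset_hyperplane[of K] unfolding K_def by (metis convex_convex_hull)
    have ab: "a \<bullet> FF \<phi> = b" for \<phi> using a(2) SK FS by blast
    obtain c where c: "c > 0" "a = c *\<^sub>R nv 0" using min_normal[OF a(1), of 0] ab by force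
    have "HH 0 pi > 0" by (rule support) auto
    moreover have "a \<bullet> (FF (0 + pi) - FF 0) = 0" using ab by (simp add: inner_diff_right)
    ultimately show False unfolding c(2) HH_inner using c(1) by simp
  qed
  have fr: "frontier K = S"
  proof
    show "frontier K \<subseteq> S"
    proof
      fix w assume w: "w \<in> frontier K"
      have wK: "w \<in> K" using w frontier_subset_closed[OF compact_imp_closed[OF cK]] by blast
      have "w \<notin> interior K" using w unfolding frontier_def by blast
      hence "w \<notin> rel_interior K" using rel_interior_nonempty_interior[OF intK] by simp
      moreover have "w \<in> closure K" using wK closure_subset by blast
      ultimately obtain a where a: "a \<noteq> 0" "\<And>y. y \<in> closure K \<Longrightarrow> a \<bullet> w \<le> a \<bullet> y"
        using supporting_hyperplane_relative_frontier[of K w] unfolding K_def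
        by (metis convex_convex_hull)
      have "continuous_on {0..2*pi} (\<lambda>\<phi>. a \<bullet> FF \<phi>)" using FF_cont by (intro continuous_intros)
      then obtain \<theta> where \<theta>: "\<theta> \<in> {0..2*pi}" "\<And>y. y \<in> {0..2*pi} \<Longrightarrow> a \<bullet> FF \<theta> \<le> a \<bullet> FF y"
        using continuous_attains_inf[of "{0..2*pi}" "\<lambda>\<phi>. a \<bullet> FF \<phi>"] by auto
      have mn: "a \<bullet> FF \<theta> \<le> a \<bullet> FF \<phi>" for \<phi>
      proof -
        obtain u where "0 \<le> u" "u < 2 * pi" "FF \<phi> = FF (0 + u)" by (rule reduce)
        then show ?thesis using \<theta>(2)[of u] by simp
      qed
      obtain c where c: "c > 0" "a = c *\<^sub>R nv \<theta>" using min_normal[OF a(1) mn] by blast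
      have "a \<bullet> w \<le> a \<bullet> FF \<theta>" using a(2) FS SK closure_subset by blast
      hence "c * (nv \<theta> \<bullet> (w - FF \<theta>)) \<le> 0" unfolding c(2) by (simp add: inner_diff_right algebra_simps)
      hence "nv \<theta> \<bullet> (w - FF \<theta>) \<le> 0" using c(1) by (simp add: mult_le_0_iff)
      hence e: "nv \<theta> \<bullet> (w - FF \<theta>) = 0" using hp[OF wK, of \<theta>] by linarith
      have "w = FF \<theta>"
      proof (rule hull_face[of w S "nv \<theta>" "FF \<theta>"])
        show "w \<in> convex hull S" using wK unfolding K_def .
        show "nv \<theta> \<bullet> (y - FF \<theta>) \<ge> 0" if "y \<in> S" for y using that supp_ge unfolding S_def by blast
        show "y = FF \<theta>" if "y \<in> S" "nv \<theta> \<bullet> (y - FF \<theta>) = 0" for y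
          using that supp_eq unfolding S_def by blast
      qed (rule e)
      then show "w \<in> S" using FS by simp
    qed
    show "S \<subseteq> frontier K"
    proof
      fix y assume "y \<in> S"
      then obtain \<theta> where y: "y = FF \<theta>" unfolding S_def by blast
      have "y \<in> closure K" using \<open>y \<in> S\<close> SK closure_subset by blast
      moreover have "y \<notin> interior K"
      proof
        assume "y \<in> interior K"
        then obtain e where e: "e > 0" "ball y e \<subseteq> K" unfolding mem_interior by blast
        define w where "w = y - (e / 2 / norm (nv \<theta>)) *\<^sub>R nv \<theta>"
        have "dist y w = e / 2" unfolding w_def dist_norm using nvnz[of \<theta>] e(1) by simp
        hence "w \<in> K" using e by auto
        have "nv \<theta> \<bullet> (w - FF \<theta>) = - (e / 2 / norm (nv \<theta>)) * (nv \<theta> \<bullet> nv \<theta>)"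
          unfolding w_def y by (simp add: inner_diff_right)
        also have "\<dots> = - (e / 2) * norm (nv \<theta>)"
          using nvnz[of \<theta>] by (simp add: power2_norm_eq_inner[symmetric] power2_eq_square)
        also have "\<dots> < 0" using e(1) nvnz[of \<theta>] by simp
        finally show False using hp[OF \<open>w \<in> K\<close>, of \<theta>] by simp
      qed
      ultimately show "y \<in> frontier K" unfolding frontier_def by blast
    qed
  qed
  have "convex_curve (harm s t ` sphere 0 \<rho>)"
    unfolding convex_curve_def img S_def[symmetric]
    using fr intK cK compact_imp_bounded unfolding K_def by (metis convex_convex_hull)
  with inj show ?thesis by blast
qed

end


theorem theorem21:
  fixes \<gamma> \<delta> lam :: real and s t :: "complex \<Rightarrow> complex"
  assumes "0 \<le> lam" "lam < \<gamma>" "\<gamma> \<le> \<delta>"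
    and "RH0 \<gamma> \<delta> lam s t"
  shows "(\<exists>!r. 0 < r \<and> r < 1 \<and> pc \<gamma> \<delta> lam r = 0) \<and>
         (\<forall>r. 0 < r \<and> r < 1 \<and> pc \<gamma> \<delta> lam r = 0 \<longrightarrow> fully_convex_in (harm s t) r)"
proof
  show "\<exists>!r. 0 < r \<and> r < 1 \<and> pc \<gamma> \<delta> lam r = 0" using pc_root assms(1-3) by blast
  show "\<forall>r. 0 < r \<and> r < 1 \<and> pc \<gamma> \<delta> lam r = 0 \<longrightarrow> fully_convex_in (harm s t) r"
  proof (intro allI impI)
    fix r assume r: "0 < r \<and> r < 1 \<and> pc \<gamma> \<delta> lam r = 0"
    have hs: "s holomorphic_on ball 0 1" and ht: "t holomorphic_on ball 0 1"
      and s1: "deriv s 0 = 1" and t1: "deriv t 0 = 0"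
      using assms(4) unfolding RH0_def H0_def by auto
    define K where "K = (\<gamma> - lam) / (\<gamma> + \<delta>)"
    have gd: "\<gamma> + \<delta> > 0" using assms by linarith
    have cb: "\<And>n. cmod ((deriv ^^ (Suc (Suc n))) s 0) / fact (Suc (Suc n)) + cmod ((deriv ^^ (Suc (Suc n))) t 0) / fact (Suc (Suc n)) \<le> K"
      unfolding K_def by (rule coeff_bound[OF assms])
    show "fully_convex_in (harm s t) r"
      unfolding fully_convex_in_def
    proof (intro allI impI)
      fix \<rho> assume \<rho>: "0 < \<rho> \<and> \<rho> < r"
      have \<rho>1: "\<rho> < 1" using \<rho> r by linarith
      have "pc \<gamma> \<delta> lam r < pc \<gamma> \<delta> lam \<rho>"
        using pc_strict_decr[of lam \<gamma> \<delta> \<rho> r] assms \<rho> r by auto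
      hence "(\<gamma> - lam) * (\<rho> * (\<rho>^2 - 3 * \<rho> + 4)) < (\<delta> + \<gamma>) * (1 - \<rho>)^3"
        using r unfolding pc_alt by linarith
      hence KB: "K * (\<rho> * (\<rho>^2 - 3 * \<rho> + 4) / (1 - \<rho>)^3) < 1"
      proof -
        have Q: "(\<delta> + \<gamma>) * (1 - \<rho>)^3 > 0" using gd \<rho>1 by simp
        have "K * (\<rho> * (\<rho>^2 - 3 * \<rho> + 4) / (1 - \<rho>)^3) =
            ((\<gamma> - lam) * (\<rho> * (\<rho>^2 - 3 * \<rho> + 4))) / ((\<delta> + \<gamma>) * (1 - \<rho>)^3)"
          unfolding K_def by (simp add: add.commute)
        also have "\<dots> < 1" using Q \<open>(\<gamma> - lam) * (\<rho> * (\<rho>^2 - 3 * \<rho> + 4)) < (\<delta> + \<gamma>) * (1 - \<rho>)^3\<close>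
          by (simp add: divide_less_eq)
        finally show ?thesis .
      qed
      have small: "cmod (z * deriv s z - z) + cmod (z^2 * deriv (deriv s) z)
        + cmod (z * deriv t z) + cmod (z^2 * deriv (deriv t) z) < \<rho>" if z: "cmod z = \<rho>" for z
      proof -
        have "z \<in> ball 0 1" using z \<rho>1 by simp
        from series_bound[OF hs ht s1 t1 cb this]
        have "cmod (z * deriv s z - z) + cmod (z^2 * deriv (deriv s) z)
          + cmod (z * deriv t z) + cmod (z^2 * deriv (deriv t) z)
          \<le> \<rho> * (K * (\<rho> * (\<rho>^2 - 3 * \<rho> + 4) / (1 - \<rho>)^3))" unfolding z by (simp add: ac_simps)
        also have "\<dots> < \<rho> * 1" using KB \<rho> by (intro mult_strict_left_mono) auto
        finally show ?thesis by simp
      qed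
      show "inj_on (harm s t) (sphere 0 \<rho>) \<and> convex_curve (harm s t ` sphere 0 \<rho>)"
        using circle_result[OF hs ht _ \<rho>1 small] \<rho> by blast
    qed
  qed
qed


end
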